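(* Let $m,n\ge 3$ be integers. The direct product $C_m\times C_n$ is a distance magic graph if and only if $n=4$, or $m=4$, or $m\equiv n\equiv 0\pmod 4$. Moreover, $C_m\times C_n$ is a balanced distance magic graph if and only if $n=4$ or $m=4$.
   Context: All graphs are finite and simple; $C_n$ denotes the cycle on $n$ vertices. For a graph $G$ and vertex $x$, $N(x)$ is the (open) neighborhood of $x$. A distance magic labeling of a graph $G$ of order $N$ is a bijection $\ell\colon V(G)\to\{1,\dots,N\}$ for which there is a constant $k$ such that $\sum_{y\in N(x)}\ell(y)=k$ for every $x\in V(G)$; $G$ is distance magic if it admits such a labeling. A balanced distance magic labeling of a graph with an even number $N$ of vertices is a distance magic labeling $\ell$ such that for every vertex $w$: whenever $u\in N(w)$ has $\ell(u)=i$, there is $v\in N(w)$ with $\ell(v)=N+1-i$; a graph is balanced distance magic if it has an even number of vertices and admits such a labeling. The direct product $G\times H$ has vertex set $V(G)\times V(H)$, with $(g,h)$ adjacent to $(g',h')$ iff $gg'\in E(G)$ and $hh'\in E(H)$. *)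

theory Defs
  imports Main
begin

text \<open>A finite simple graph is given by a finite vertex set V and a symmetric,
irreflexive adjacency relation E on V.\<close>

definition nbhd :: "'a set \<Rightarrow> ('a \<Rightarrow> 'a \<Rightarrow> bool) \<Rightarrow> 'a \<Rightarrow> 'a set" where
  "nbhd V E x = {y \<in> V. E x y}"

definition distance_magic_labeling ::
  "'a set \<Rightarrow> ('a \<Rightarrow> 'a \<Rightarrow> bool) \<Rightarrow> ('a \<Rightarrow> nat) \<Rightarrow> bool" where
  "distance_magic_labeling V E l \<longleftrightarrow>
     bij_betw l V {1..card V} \<and>
     (\<exists>k. \<forall>x\<in>V. (\<Sum>y\<in>nbhd V E x. l y) = k)"

definition distance_magic :: "'a set \<Rightarrow> ('a \<Rightarrow> 'a \<Rightarrow> bool) \<Rightarrow> bool" where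
  "distance_magic V E \<longleftrightarrow> (\<exists>l. distance_magic_labeling V E l)"

definition balanced_distance_magic :: "'a set \<Rightarrow> ('a \<Rightarrow> 'a \<Rightarrow> bool) \<Rightarrow> bool" where
  "balanced_distance_magic V E \<longleftrightarrow> even (card V) \<and>
     (\<exists>l. distance_magic_labeling V E l \<and>
        (\<forall>w\<in>V. \<forall>u\<in>nbhd V E w. \<exists>v\<in>nbhd V E w. l v = card V + 1 - l u))"

definition cycle_adj :: "nat \<Rightarrow> nat \<Rightarrow> nat \<Rightarrow> bool" where
  "cycle_adj n i j \<longleftrightarrow> i < n \<and> j < n \<and> i \<noteq> j \<and> (j = (i + 1) mod n \<or> i = (j + 1) mod n)"

definition cycle_verts :: "nat \<Rightarrow> nat set" where
  "cycle_verts n = {0..<n}"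

definition direct_prod_verts :: "'a set \<Rightarrow> 'b set \<Rightarrow> ('a \<times> 'b) set" where
  "direct_prod_verts V W = V \<times> W"

definition direct_prod_adj ::
  "('a \<Rightarrow> 'a \<Rightarrow> bool) \<Rightarrow> ('b \<Rightarrow> 'b \<Rightarrow> bool) \<Rightarrow> 'a \<times> 'b \<Rightarrow> 'a \<times> 'b \<Rightarrow> bool" where
  "direct_prod_adj E F p q \<longleftrightarrow> E (fst p) (fst q) \<and> F (snd p) (snd q)"

end

theory Submission
  imports Defs
begin

definition sq :: "(nat \<times> nat \<Rightarrow> nat) \<Rightarrow> nat \<Rightarrow> nat \<Rightarrow> nat \<Rightarrow> nat \<Rightarrow> nat" where
  "sq l m n i j = l (i,j) + l (i,(j+2) mod n) + l ((i+2) mod m, j) + l ((i+2) mod m, (j+2) mod n)"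

lemma predm: assumes "(a::nat) < m" shows "(a+m-1) mod m = (if a=0 then m-1 else a-1)"
proof (cases "a = 0")
  case False
  then have "a+m-1 = (a-1)+m" by arith
  then have "(a+m-1) mod m = (a-1) mod m" by (metis mod_add_self2)
  then show ?thesis using False assms by simp
next
  case True
  then show ?thesis using assms by simp
qed

lemma sucm: assumes "(a::nat) < m" shows "(a+1) mod m = (if a=m-1 then 0 else a+1)"
proof (cases "a = m - 1")
  case True
  then have "a + 1 = m" using assms by arith
  then show ?thesis using True by simp
next
  case False
  then show ?thesis using assms by simp
qed

lemma dist_pm:
  assumes "(m::nat) \<ge> 3" "a < m"
  shows "(a+1) mod m \<noteq> (a+m-1) mod m"
proof (cases "a = 0")
  case True
  then show ?thesis using assms predm[OF assms(2)] sucm[OF assms(2)] by simp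
next
  case False
  then have p: "(a+m-1) mod m = a - 1" using predm[OF assms(2)] by simp
  show ?thesis
  proof (cases "a = m - 1")
    case True
    then show ?thesis using p sucm[OF assms(2)] assms by simp
  next
    case F2: False
    then show ?thesis using p sucm[OF assms(2)] False by simp
  qed
qed

lemma cyc_adj_iff:
  assumes "m \<ge> 3" "a < m"
  shows "cycle_adj m a c \<longleftrightarrow> (c = (a+1) mod m \<or> c = (a+m-1) mod m)"
proof
  assume H: "cycle_adj m a c"
  then have c: "c < m" and o: "c = (a+1) mod m \<or> a = (c+1) mod m" unfolding cycle_adj_def by auto
  show "c = (a+1) mod m \<or> c = (a+m-1) mod m"
  proof (cases "c = (a+1) mod m")
    case False
    then have a: "a = (c+1) mod m" using o by blast
    show ?thesis
    proof (cases "c = m - 1")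
      case True
      then have "a = 0" using a sucm[OF c] by simp
      then show ?thesis using predm[OF assms(2)] True by simp
    next
      case False
      then have "a = c + 1" using a sucm[OF c] by simp
      then show ?thesis using predm[OF assms(2)] by simp
    qed
  qed simp
next
  assume H: "c = (a+1) mod m \<or> c = (a+m-1) mod m"
  have m0: "m > 0" using assms by simp
  show "cycle_adj m a c"
  proof (cases "c = (a+1) mod m")
    case True
    have "c < m" using True m0 by simp
    moreover have "a \<noteq> c"
    proof (cases "a = m - 1")
      case True
      then show ?thesis using \<open>c = (a+1) mod m\<close> sucm[OF assms(2)] assms by simp
    next
      case False
      then show ?thesis using \<open>c = (a+1) mod m\<close> sucm[OF assms(2)] by simp
    qed
    ultimately show ?thesis unfolding cycle_adj_def using assms True by blast
  next
    case False
    then have c: "c = (a+m-1) mod m" using H by blast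
    have cm: "c < m" using c m0 by simp
    show ?thesis
    proof (cases "a = 0")
      case True
      then have "c = m - 1" using c predm[OF assms(2)] by simp
      then have "a \<noteq> c" "a = (c+1) mod m" using True assms sucm[OF cm] by auto
      then show ?thesis unfolding cycle_adj_def using assms cm by blast
    next
      case False
      then have "c = a - 1" using c predm[OF assms(2)] by simp
      then have "a \<noteq> c" "a = (c+1) mod m" using False assms sucm[OF cm] by auto
      then show ?thesis unfolding cycle_adj_def using assms cm by blast
    qed
  qed
qed

lemma nbhd_eq:
  assumes "m \<ge> 3" "n \<ge> 3" "a < m" "b < n"
  shows "nbhd (direct_prod_verts (cycle_verts m) (cycle_verts n)) (direct_prod_adj (cycle_adj m) (cycle_adj n)) (a,b)
     = {(a+1) mod m, (a+m-1) mod m} \<times> {(b+1) mod n, (b+n-1) mod n}"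
proof (rule set_eqI)
  fix x :: "nat \<times> nat"
  obtain c d where x: "x = (c,d)" by (cases x)
  have m0: "m > 0" "n > 0" using assms by auto
  have "x \<in> nbhd (direct_prod_verts (cycle_verts m) (cycle_verts n)) (direct_prod_adj (cycle_adj m) (cycle_adj n)) (a,b)
     \<longleftrightarrow> c < m \<and> d < n \<and> cycle_adj m a c \<and> cycle_adj n b d"
    unfolding x nbhd_def direct_prod_verts_def cycle_verts_def direct_prod_adj_def by simp
  also have "\<dots> \<longleftrightarrow> c < m \<and> d < n \<and> (c = (a+1) mod m \<or> c = (a+m-1) mod m) \<and> (d = (b+1) mod n \<or> d = (b+n-1) mod n)"
    using cyc_adj_iff[OF assms(1,3)] cyc_adj_iff[OF assms(2,4)] by simp
  also have "\<dots> \<longleftrightarrow> (c = (a+1) mod m \<or> c = (a+m-1) mod m) \<and> (d = (b+1) mod n \<or> d = (b+n-1) mod n)"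
    using m0 by auto
  also have "\<dots> \<longleftrightarrow> x \<in> {(a+1) mod m, (a+m-1) mod m} \<times> {(b+1) mod n, (b+n-1) mod n}"
    unfolding x by blast
  finally show "x \<in> nbhd (direct_prod_verts (cycle_verts m) (cycle_verts n)) (direct_prod_adj (cycle_adj m) (cycle_adj n)) (a,b)
     \<longleftrightarrow> x \<in> {(a+1) mod m, (a+m-1) mod m} \<times> {(b+1) mod n, (b+n-1) mod n}" .
qed

lemma add4: "(w::nat)+x+y+z = z+y+x+w" by simp

lemma sum4:
  assumes "x1 \<noteq> x2" "y1 \<noteq> y2"
  shows "sum l ({x1,x2}\<times>{y1,y2}) = l(x1,y1)+l(x1,y2)+l(x2,y1)+l(x2,y2)"
proof -
  have "{x1,x2}\<times>{y1,y2} = {(x1,y1),(x1,y2),(x2,y1),(x2,y2)}" by auto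
  then show ?thesis using assms by (simp add: add.assoc)
qed

lemma nbhd_sum:
  assumes "m \<ge> 3" "n \<ge> 3" "a < m" "b < n"
  shows "(\<Sum>y\<in>nbhd (direct_prod_verts (cycle_verts m) (cycle_verts n)) (direct_prod_adj (cycle_adj m) (cycle_adj n)) (a,b). l y)
     = sq l m n ((a+m-1) mod m) ((b+n-1) mod n)"
proof -
  have d1: "(a+1) mod m \<noteq> (a+m-1) mod m" using dist_pm assms by blast
  have d2: "(b+1) mod n \<noteq> (b+n-1) mod n" using dist_pm assms by blast
  have e1: "((a+m-1) mod m + 2) mod m = (a+1) mod m"
  proof -
    have "((a+m-1) mod m + 2) mod m = (a+m-1+2) mod m" by (rule mod_add_left_eq)
    also have "a+m-1+2 = (a+1) + m" using assms by simp
    also have "((a+1)+m) mod m = (a+1) mod m" by (rule mod_add_self2)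
    finally show ?thesis .
  qed
  have e2: "((b+n-1) mod n + 2) mod n = (b+1) mod n"
  proof -
    have "((b+n-1) mod n + 2) mod n = (b+n-1+2) mod n" by (rule mod_add_left_eq)
    also have "b+n-1+2 = (b+1) + n" using assms by simp
    also have "((b+1)+n) mod n = (b+1) mod n" by (rule mod_add_self2)
    finally show ?thesis .
  qed
  have s1: "(\<Sum>y\<in>nbhd (direct_prod_verts (cycle_verts m) (cycle_verts n)) (direct_prod_adj (cycle_adj m) (cycle_adj n)) (a,b). l y)
     = l((a+1) mod m,(b+1) mod n)+l((a+1) mod m,(b+n-1) mod n)+l((a+m-1) mod m,(b+1) mod n)+l((a+m-1) mod m,(b+n-1) mod n)"
    by (simp only: nbhd_eq[OF assms] sum4[OF d1 d2])
  have s2: "sq l m n ((a+m-1) mod m) ((b+n-1) mod n) = 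
     l((a+m-1) mod m,(b+n-1) mod n)+l((a+m-1) mod m,(b+1) mod n)+l((a+1) mod m,(b+n-1) mod n)+l((a+1) mod m,(b+1) mod n)"
    by (simp only: sq_def e1 e2)
  show ?thesis unfolding s1 s2 by (rule add4)
qed

abbreviation "VV m n \<equiv> direct_prod_verts (cycle_verts m) (cycle_verts n)"
abbreviation "EE m n \<equiv> direct_prod_adj (cycle_adj m) (cycle_adj n)"

lemma VV_eq: "VV m n = {0..<m} \<times> {0..<n}"
  unfolding direct_prod_verts_def cycle_verts_def by simp

lemma card_VV: "card (VV m n) = m * n"
  unfolding VV_eq by simp

lemma back_fw:
  assumes "(i::nat) < m"
  shows "((i+1) mod m + m - 1) mod m = i"
proof (cases "i = m - 1")
  case True
  then have "(i+1) mod m = 0" using sucm[OF assms] by simp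
  then show ?thesis using predm[of 0 m] True assms by simp
next
  case False
  then have a: "(i+1) mod m = i + 1" using sucm[OF assms] by simp
  have "i + 1 < m" using False assms by simp
  then show ?thesis unfolding a using predm[of "i+1" m] by simp
qed

lemma card_box: "card ({0..<m::nat} \<times> {0..<n::nat}) = m * n" by simp

lemma dm_char:
  assumes "m \<ge> 3" "n \<ge> 3"
  shows "distance_magic_labeling (VV m n) (EE m n) l \<longleftrightarrow>
     bij_betw l ({0..<m}\<times>{0..<n}) {1..m*n} \<and> (\<exists>k. \<forall>i<m. \<forall>j<n. sq l m n i j = k)"
proof
  assume H: "distance_magic_labeling (VV m n) (EE m n) l"
  then have b: "bij_betw l ({0..<m}\<times>{0..<n}) {1..m*n}"
    unfolding distance_magic_labeling_def card_VV VV_eq card_box by (rule conjunct1)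
  from H obtain k where k: "\<forall>x\<in>VV m n. (\<Sum>y\<in>nbhd (VV m n) (EE m n) x. l y) = k"
    unfolding distance_magic_labeling_def by blast
  have "\<forall>i<m. \<forall>j<n. sq l m n i j = k"
  proof (intro allI impI)
    fix i j assume i: "i < m" and j: "j < n"
    have m0: "m > 0" "n > 0" using i j by auto
    have a: "(i+1) mod m < m" "(j+1) mod n < n" using mod_less_divisor[OF m0(1)] mod_less_divisor[OF m0(2)] by blast+
    have mem: "((i+1) mod m, (j+1) mod n) \<in> VV m n" unfolding VV_eq using a by simp
    have "(\<Sum>y\<in>nbhd (VV m n) (EE m n) ((i+1) mod m, (j+1) mod n). l y) = k"
      using k mem by blast
    then show "sq l m n i j = k"
      unfolding nbhd_sum[OF assms a] back_fw[OF i] back_fw[OF j] .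
  qed
  then show "bij_betw l ({0..<m}\<times>{0..<n}) {1..m*n} \<and> (\<exists>k. \<forall>i<m. \<forall>j<n. sq l m n i j = k)"
    using b by blast
next
  assume H: "bij_betw l ({0..<m}\<times>{0..<n}) {1..m*n} \<and> (\<exists>k. \<forall>i<m. \<forall>j<n. sq l m n i j = k)"
  then obtain k where k: "\<forall>i<m. \<forall>j<n. sq l m n i j = k" by blast
  have m0: "m > 0" "n > 0" using assms by auto
  have "\<forall>x\<in>VV m n. (\<Sum>y\<in>nbhd (VV m n) (EE m n) x. l y) = k"
  proof
    fix x assume xV: "x \<in> VV m n"
    obtain a b where x1: "x = (a,b)" by (cases x)
    have x: "x = (a,b)" "a < m" "b < n" using xV unfolding x1 VV_eq by auto
    have "(a+m-1) mod m < m" "(b+n-1) mod n < n" using mod_less_divisor[OF m0(1)] mod_less_divisor[OF m0(2)] by blast+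
    then show "(\<Sum>y\<in>nbhd (VV m n) (EE m n) x. l y) = k"
      unfolding x(1) nbhd_sum[OF assms x(2,3)] using k by blast
  qed
  moreover have "bij_betw l (VV m n) {1..card (VV m n)}" using H unfolding card_VV VV_eq card_box by (rule conjunct1)
  ultimately show "distance_magic_labeling (VV m n) (EE m n) l"
    unfolding distance_magic_labeling_def by blast
qed


lemma step_iter:
  fixes M i t :: nat
  assumes "M > 0" "\<forall>i<M. \<phi> i + \<phi> ((i+2) mod M) = (c::nat)" "i < M"
  shows "\<phi> ((i+4*t) mod M) = \<phi> i"
proof (induction t)
  case 0
  then show ?case using assms(3) by simp
next
  case (Suc t)
  define i' where "i' = (i+4*t) mod M"
  define i2 where "i2 = (i'+2) mod M"
  have i': "i' < M" unfolding i'_def using assms(1) by simp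
  have i2: "i2 < M" unfolding i2_def using assms(1) by simp
  have e1: "\<phi> i' + \<phi> i2 = c" using assms(2) i' unfolding i2_def by blast
  have e2: "\<phi> i2 + \<phi> ((i2+2) mod M) = c" using assms(2) i2 by blast
  have "(i2+2) mod M = (i'+2+2) mod M" unfolding i2_def by (rule mod_add_left_eq)
  also have "i'+2+2 = i' + 4" by simp
  also have "(i' + 4) mod M = (i+4*t+4) mod M" unfolding i'_def by (rule mod_add_left_eq)
  also have "i+4*t+4 = i + 4 * Suc t" by simp
  finally have "(i2+2) mod M = (i + 4 * Suc t) mod M" .
  then show ?case using e1 e2 Suc.IH i'_def by simp
qed

lemma shift2:
  assumes "(M::nat) mod 4 \<noteq> 0"
  shows "\<exists>t. (i+4*t) mod M = (i+2) mod M"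
proof (cases "M mod 2 = 1")
  case True
  then have "4 * ((M+1) div 2) = 2 + M * 2" by presburger
  then have "(i+4*((M+1) div 2)) mod M = (i+2) mod M" by (metis add.assoc mod_mult_self2)
  then show ?thesis by blast
next
  case False
  then have "4 * ((M+2) div 4) = 2 + M * 1" using assms by presburger
  then have "(i+4*((M+2) div 4)) mod M = (i+2) mod M" by (metis add.assoc mod_mult_self2)
  then show ?thesis by blast
qed

lemma period2:
  fixes M i :: nat
  assumes "M > 0" "\<forall>i<M. \<phi> i + \<phi> ((i+2) mod M) = (c::nat)" "i < M" "M mod 4 \<noteq> 0"
  shows "\<phi> ((i+2) mod M) = \<phi> i"
proof -
  obtain t where "(i+4*t) mod M = (i+2) mod M" using shift2[OF assms(4)] by blast
  then show ?thesis using step_iter[OF assms(1,2,3)] by metis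
qed



lemma neccore:
  assumes "m \<ge> 3" "n \<ge> 3" "inj_on l ({0..<m}\<times>{0..<n})"
    "\<forall>i<m. \<forall>j<n. sq l m n i j = k" "m mod 4 \<noteq> 0"
  shows "n = 4"
proof (rule ccontr)
  assume n4: "n \<noteq> 4"
  have m0: "m > 0" "n > 0" using assms(1,2) by simp_all
  have g: "2 * (l (i,j) + l (i,(j+2) mod n)) = k" if i: "i < m" and j: "j < n" for i j
  proof -
    define \<phi> where "\<phi> = (\<lambda>i. l (i,j) + l (i,(j+2) mod n))"
    have rel: "\<forall>i<m. \<phi> i + \<phi> ((i+2) mod m) = k"
    proof (intro allI impI)
      fix i assume "i < m"
      then have "sq l m n i j = k" using assms(4) j by blast
      then show "\<phi> i + \<phi> ((i+2) mod m) = k" unfolding \<phi>_def sq_def by (simp only: add.assoc)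
    qed
    have p: "\<phi> ((i+2) mod m) = \<phi> i" by (rule period2[OF m0(1) rel i assms(5)])
    have "\<phi> i + \<phi> ((i+2) mod m) = k" using rel i by blast
    then have "2 * \<phi> i = k" unfolding p by simp
    then show ?thesis unfolding \<phi>_def .
  qed
  define \<psi> where "\<psi> = (\<lambda>j. l (0,j))"
  have rel2: "\<forall>j<n. \<psi> j + \<psi> ((j+2) mod n) = k div 2"
  proof (intro allI impI)
    fix j assume "j < n"
    then have "2 * (l (0,j) + l (0,(j+2) mod n)) = k" using g m0(1) by blast
    then show "\<psi> j + \<psi> ((j+2) mod n) = k div 2" unfolding \<psi>_def by (metis nonzero_mult_div_cancel_left zero_neq_numeral)
  qed
  have in0: "(0::nat,0::nat) \<in> {0..<m}\<times>{0..<n}" using m0 by simp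
  show False
  proof (cases "n mod 4 = 0")
    case False
    have "\<psi> ((0+2) mod n) = \<psi> 0" by (rule period2[OF m0(2) rel2 m0(2) False])
    moreover have "(0+2) mod n = (2::nat)" using assms(2) by simp
    ultimately have e: "l (0,2) = l (0,0)" unfolding \<psi>_def by simp
    have in2: "(0::nat,2::nat) \<in> {0..<m}\<times>{0..<n}" using m0 assms(2) by simp
    have "(0::nat,2::nat) = (0,0)" using inj_onD[OF assms(3) e in2 in0] .
    then show False by simp
  next
    case True
    then have n8: "n \<ge> 8" using n4 assms(2) by presburger
    have "\<psi> ((0+4*1) mod n) = \<psi> 0" by (rule step_iter[OF m0(2) rel2 m0(2)])
    moreover have "(0+4*1) mod n = (4::nat)" using n8 by simp
    ultimately have e: "l (0,4) = l (0,0)" unfolding \<psi>_def by simp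
    have in2: "(0::nat,4::nat) \<in> {0..<m}\<times>{0..<n}" using m0 n8 by simp
    have "(0::nat,4::nat) = (0,0)" using inj_onD[OF assms(3) e in2 in0] .
    then show False by simp
  qed
qed


definition swp :: "(nat \<times> nat \<Rightarrow> nat) \<Rightarrow> nat \<times> nat \<Rightarrow> nat" where
  "swp l = (\<lambda>x. l (snd x, fst x))"

lemma sq_swap: "sq (swp l) n m j i = sq l m n i j"
  unfolding sq_def swp_def by simp

lemma inj_swap:
  assumes "inj_on l ({0..<m}\<times>{0..<n})"
  shows "inj_on (swp l) ({0..<n}\<times>{0..<m})"
proof (rule inj_onI)
  fix x y assume x: "x \<in> {0..<n}\<times>{0..<m}" and y: "y \<in> {0..<n}\<times>{0..<m}" and e: "swp l x = swp l y"
  have "(snd x, fst x) = (snd y, fst y)"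
    using inj_onD[OF assms e[unfolded swp_def]] x y by auto
  then show "x = y" by (simp add: prod_eq_iff)
qed

lemma bij_from_inj:
  assumes "inj_on f A" "f ` A \<subseteq> {1..N}" "card A = N" "finite A"
  shows "bij_betw f A {1..N}"
proof -
  have "card (f ` A) = card {1..N}" using card_image[OF assms(1)] assms(3) by simp
  then have "f ` A = {1..N}" using card_subset_eq[OF _ assms(2)] by simp
  then show ?thesis using assms(1) unfolding bij_betw_def by blast
qed

fun labA :: "nat \<Rightarrow> nat \<times> nat \<Rightarrow> nat" where
  "labA m (i,j) = (if j < 2 then 2*i+j+1 else 4*m+2-2*i-j)"

lemma pairA:
  assumes "i < m" "j < 4"
  shows "labA m (i,j) + labA m (i,(j+2) mod 4) = 4*m+1"
proof -
  have "j = 0 \<or> j = 1 \<or> j = 2 \<or> j = 3" using assms by arith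
  then show ?thesis using assms by auto
qed

lemma sqA:
  assumes "i < m" "j < 4"
  shows "sq (labA m) m 4 i j = 2*(4*m+1)"
proof -
  have i2: "(i+2) mod m < m" using assms by simp
  show ?thesis unfolding sq_def using pairA[OF assms] pairA[OF i2 assms(2)] by simp
qed

lemma injA: "inj_on (labA m) ({0..<m}\<times>{0..<4})"
proof (rule inj_onI)
  fix x y assume x: "x \<in> {0..<m}\<times>{0..<4}" and y: "y \<in> {0..<m}\<times>{0..<4}" and e: "labA m x = labA m y"
  obtain a b c d where xy: "x = (a,b)" "y = (c,d)" by (cases x, cases y)
  have r: "a < m" "b < 4" "c < m" "d < 4" using x y xy by auto
  have e2: "labA m (a,b) = labA m (c,d)" using e xy by simp
  have "a = c \<and> b = d"
  proof (cases "b < 2")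
    case True
    show ?thesis
    proof (cases "d < 2")
      case True
      then have "2*a+b = 2*c+d" using e2 \<open>b<2\<close> by simp
      then show ?thesis using True \<open>b<2\<close> by presburger
    next
      case False
      have "labA m (a,b) \<le> 2*m" using \<open>b<2\<close> r by simp
      moreover have "labA m (c,d) > 2*m" using False r by simp
      ultimately show ?thesis using e2 by simp
    qed
  next
    case False
    show ?thesis
    proof (cases "d < 2")
      case True
      have "labA m (c,d) \<le> 2*m" using True r by simp
      moreover have "labA m (a,b) > 2*m" using False r by simp
      ultimately show ?thesis using e2 by simp
    next
      case F2: False
      then have "2*a+b = 2*c+d" using e2 False r by simp
      then show ?thesis using F2 False r by presburger
    qed
  qed
  then show "x = y" using xy by simp
qed

lemma rangeA: "labA m ` ({0..<m}\<times>{0..<4}) \<subseteq> {1..4*m}"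
proof
  fix y assume "y \<in> labA m ` ({0..<m}\<times>{0..<4})"
  then obtain a b where "y = labA m (a,b)" "a < m" "b < 4" by auto
  then show "y \<in> {1..4*m}"
  proof (cases "b < 2")
    case False
    then have "y = 4*m+2-(2*a+b)" using \<open>y = labA m (a,b)\<close> by simp
    moreover have "2*a+b \<le> 4*m+1" "2*a+b \<ge> 2" using \<open>a<m\<close> \<open>b<4\<close> False by simp_all
    ultimately show ?thesis by (simp only: atLeastAtMost_iff) arith
  qed simp
qed

lemma bijA: "bij_betw (labA m) ({0..<m}\<times>{0..<4}) {1..m*4}"
  by (rule bij_from_inj[OF injA]) (use rangeA in auto)

lemma dmA:
  assumes "m \<ge> 3"
  shows "distance_magic_labeling (VV m 4) (EE m 4) (labA m)"
proof -
  have t: "3 \<le> (4::nat)" by simp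
  have "\<forall>i<m. \<forall>j<4. sq (labA m) m 4 i j = 2*(4*m+1)" using sqA by blast
  then have "\<exists>k. \<forall>i<m. \<forall>j<4. sq (labA m) m 4 i j = k" by blast
  then show ?thesis unfolding dm_char[OF assms t] using bijA by blast
qed


lemma mod4_flip:
  assumes "d \<in> {((b::nat)+1) mod 4, (b+4-1) mod 4}"
  shows "(d+2) mod 4 \<in> {(b+1) mod 4, (b+4-1) mod 4}"
proof -
  have b3: "b+4-1 = b+3" by simp
  have "d = (b+1) mod 4 \<or> d = (b+3) mod 4" using assms unfolding b3 by blast
  then show ?thesis
  proof
    assume "d = (b+1) mod 4"
    then have "(d+2) mod 4 = (b+1+2) mod 4" by (simp only: mod_add_left_eq)
    also have "b+1+2 = b+3" by simp
    finally show ?thesis unfolding b3 by blast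
  next
    assume "d = (b+3) mod 4"
    then have "(d+2) mod 4 = (b+3+2) mod 4" by (simp only: mod_add_left_eq)
    also have "b+3+2 = (b+1) + 4" by simp
    also have "((b+1) + 4) mod 4 = (b+1) mod 4" by (rule mod_add_self2)
    finally show ?thesis unfolding b3 by blast
  qed
qed

lemma balA:
  assumes "m \<ge> 3"
  shows "balanced_distance_magic (VV m 4) (EE m 4)"
proof -
  have t: "3 \<le> (4::nat)" by simp
  have m0: "m > 0" using assms by simp
  have "\<forall>w\<in>VV m 4. \<forall>u\<in>nbhd (VV m 4) (EE m 4) w. \<exists>v\<in>nbhd (VV m 4) (EE m 4) w.
          labA m v = card (VV m 4) + 1 - labA m u"
  proof (intro ballI)
    fix w u assume w: "w \<in> VV m 4" and u: "u \<in> nbhd (VV m 4) (EE m 4) w"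
    obtain a b where wab: "w = (a,b)" by (cases w)
    have ab: "a < m" "b < 4" using w unfolding wab VV_eq by auto
    obtain c d where ucd: "u = (c,d)" by (cases u)
    have cd: "c \<in> {(a+1) mod m, (a+m-1) mod m}" "d \<in> {(b+1) mod 4, (b+4-1) mod 4}"
      using u unfolding wab ucd nbhd_eq[OF assms t ab] mem_Sigma_iff by blast+
    have c: "c < m" using cd(1) mod_less_divisor[OF m0] by blast
    have f: "(0::nat) < 4" by simp
    have d: "d < 4" using cd(2) mod_less_divisor[OF f] by blast
    have vin: "(c, (d+2) mod 4) \<in> nbhd (VV m 4) (EE m 4) w"
      unfolding wab nbhd_eq[OF assms t ab] using cd(1) mod4_flip[OF cd(2)] by blast
    have P: "labA m (c,d) + labA m (c,(d+2) mod 4) = 4*m+1" by (rule pairA[OF c d])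
    have "labA m (c, (d+2) mod 4) = 4*m + 1 - labA m (c,d)" using P by linarith
    then have "labA m (c, (d+2) mod 4) = card (VV m 4) + 1 - labA m u"
      unfolding card_VV ucd by (simp only: mult.commute)
    then show "\<exists>v\<in>nbhd (VV m 4) (EE m 4) w. labA m v = card (VV m 4) + 1 - labA m u"
      using vin by blast
  qed
  moreover have "even (card (VV m 4))" unfolding card_VV by simp
  ultimately show ?thesis unfolding balanced_distance_magic_def using dmA[OF assms] by blast
qed

lemma bijB: "bij_betw (swp (labA n)) ({0..<4}\<times>{0..<n}) {1..4*n}"
proof (rule bij_from_inj)
  show "inj_on (swp (labA n)) ({0..<4}\<times>{0..<n})" by (rule inj_swap[OF injA])
  show "swp (labA n) ` ({0..<4}\<times>{0..<n}) \<subseteq> {1..4*n}"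
  proof
    fix y assume "y \<in> swp (labA n) ` ({0..<4}\<times>{0..<n})"
    then obtain x where x: "x \<in> {0..<4}\<times>{0..<n}" "y = swp (labA n) x" by blast
    have "(snd x, fst x) \<in> {0..<n}\<times>{0..<4}" using x(1) by auto
    then have "y \<in> labA n ` ({0..<n}\<times>{0..<4})" using x(2) unfolding swp_def by blast
    then show "y \<in> {1..4*n}" using rangeA by blast
  qed
qed simp_all

lemma dmB:
  assumes "n \<ge> 3"
  shows "distance_magic_labeling (VV 4 n) (EE 4 n) (swp (labA n))"
proof -
  have t: "3 \<le> (4::nat)" by simp
  have "\<forall>i<4. \<forall>j<n. sq (swp (labA n)) 4 n i j = 2*(4*n+1)"
  proof (intro allI impI)
    fix i j :: nat assume "i < 4" "j < n"
    then show "sq (swp (labA n)) 4 n i j = 2*(4*n+1)" unfolding sq_swap by (rule sqA[rotated])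
  qed
  then have "\<exists>k. \<forall>i<4. \<forall>j<n. sq (swp (labA n)) 4 n i j = k" by blast
  then show ?thesis unfolding dm_char[OF t assms] using bijB by blast
qed

lemma balB:
  assumes "n \<ge> 3"
  shows "balanced_distance_magic (VV 4 n) (EE 4 n)"
proof -
  have t: "3 \<le> (4::nat)" by simp
  have n0: "n > 0" using assms by simp
  have "\<forall>w\<in>VV 4 n. \<forall>u\<in>nbhd (VV 4 n) (EE 4 n) w. \<exists>v\<in>nbhd (VV 4 n) (EE 4 n) w.
          swp (labA n) v = card (VV 4 n) + 1 - swp (labA n) u"
  proof (intro ballI)
    fix w u assume w: "w \<in> VV 4 n" and u: "u \<in> nbhd (VV 4 n) (EE 4 n) w"
    obtain a b where wab: "w = (a,b)" by (cases w)
    have ab: "a < 4" "b < n" using w unfolding wab VV_eq by auto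
    obtain c d where ucd: "u = (c,d)" by (cases u)
    have cd: "c \<in> {(a+1) mod 4, (a+4-1) mod 4}" "d \<in> {(b+1) mod n, (b+n-1) mod n}"
      using u unfolding wab ucd nbhd_eq[OF t assms ab] mem_Sigma_iff by blast+
    have d: "d < n" using cd(2) mod_less_divisor[OF n0] by blast
    have f: "(0::nat) < 4" by simp
    have c: "c < 4" using cd(1) mod_less_divisor[OF f] by blast
    have vin: "((c+2) mod 4, d) \<in> nbhd (VV 4 n) (EE 4 n) w"
      unfolding wab nbhd_eq[OF t assms ab] using cd(2) mod4_flip[OF cd(1)] by blast
    have P: "labA n (d,c) + labA n (d,(c+2) mod 4) = 4*n+1" by (rule pairA[OF d c])
    have "labA n (d, (c+2) mod 4) = 4*n + 1 - labA n (d,c)" using P by linarith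
    then have "swp (labA n) ((c+2) mod 4, d) = card (VV 4 n) + 1 - swp (labA n) u"
      unfolding card_VV ucd swp_def fst_conv snd_conv by (simp only: mult.commute)
    then show "\<exists>v\<in>nbhd (VV 4 n) (EE 4 n) w. swp (labA n) v = card (VV 4 n) + 1 - swp (labA n) u"
      using vin by blast
  qed
  moreover have "even (card (VV 4 n))" unfolding card_VV by simp
  ultimately show ?thesis unfolding balanced_distance_magic_def using dmB[OF assms] by blast
qed


definition cE :: "nat \<Rightarrow> nat" where "cE a = (a div 2) mod 2"
definition cX :: "nat \<Rightarrow> nat" where "cX a = a div 4"
definition cR :: "nat \<Rightarrow> nat \<Rightarrow> nat" where "cR a b = 4*(a mod 2) + 2*(b mod 2) + cE b"
definition cS :: "nat \<Rightarrow> nat \<Rightarrow> nat \<Rightarrow> nat" where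
  "cS p a b = (if cE b = 0 then cX a + p * cX b else p * cX b + (p - 1 - cX a))"
definition zC :: "nat \<Rightarrow> nat \<Rightarrow> nat \<Rightarrow> nat \<Rightarrow> nat" where
  "zC p q a b = cR a b * (p*q) + cS p a b"
definition labC :: "nat \<Rightarrow> nat \<Rightarrow> nat \<times> nat \<Rightarrow> nat" where
  "labC p q x = (if cE (fst x) = 0 then 8*p*q + 1 + zC p q (fst x) (snd x) else 8*p*q - zC p q (fst x) (snd x))"

lemma cX_lt: "a < 4*p \<Longrightarrow> cX a < p"
  unfolding cX_def by (simp add: less_mult_imp_div_less mult.commute)

lemma cE_le: "cE a \<le> 1" unfolding cE_def by simp

lemma cR_le: "cR a b \<le> 7"
proof -
  have "a mod 2 \<le> 1" "b mod 2 \<le> 1" by simp_all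
  then show ?thesis unfolding cR_def using cE_le[of b] by linarith
qed

lemma cS_lt:
  assumes "a < 4*p" "b < 4*q"
  shows "cS p a b < p*q"
proof -
  have x: "cX a < p" "cX b < q" using cX_lt assms by blast+
  have "p * (cX b + 1) \<le> p * q" using x(2) by (intro mult_le_mono2) simp
  moreover have "cS p a b < p * (cX b + 1)"
    unfolding cS_def using x(1) by (auto simp: algebra_simps)
  ultimately show ?thesis by linarith
qed

lemma zC_lt:
  assumes "a < 4*p" "b < 4*q"
  shows "zC p q a b < 8*p*q"
proof -
  have "cR a b * (p*q) \<le> 7 * (p*q)" using cR_le by (intro mult_le_mono1)
  then show ?thesis unfolding zC_def using cS_lt[OF assms] by linarith
qed

lemma decode:
  fixes T r s r' s' :: nat
  assumes "s < T" "s' < T" "r*T + s = r'*T + s'"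
  shows "r = r' \<and> s = s'"
proof -
  have "(r*T + s) div T = r" "(r*T + s) mod T = s" using assms(1) by simp_all
  moreover have "(r'*T + s') div T = r'" "(r'*T + s') mod T = s'" using assms(2) by simp_all
  ultimately show ?thesis using assms(3) by metis
qed

lemma digits:
  fixes x1 y1 z1 x2 y2 z2 :: nat
  shows "x1 \<le> 1 \<Longrightarrow> y1 \<le> 1 \<Longrightarrow> z1 \<le> 1 \<Longrightarrow> x2 \<le> 1 \<Longrightarrow> y2 \<le> 1 \<Longrightarrow> z2 \<le> 1 \<Longrightarrow>
    4*x1+2*y1+z1 = 4*x2+2*y2+z2 \<Longrightarrow> x1 = x2 \<and> y1 = y2 \<and> z1 = z2"
  by presburger

lemma recon: "a = 4 * cX a + 2 * cE a + a mod 2"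
  unfolding cX_def cE_def by presburger

lemma injC:
  assumes "p > 0" "q > 0"
  shows "inj_on (labC p q) ({0..<4*p}\<times>{0..<4*q})"
proof (rule inj_onI)
  fix x y assume x: "x \<in> {0..<4*p}\<times>{0..<4*q}" and y: "y \<in> {0..<4*p}\<times>{0..<4*q}"
    and e: "labC p q x = labC p q y"
  obtain a b where xab: "x = (a,b)" by (cases x)
  obtain c d where ycd: "y = (c,d)" by (cases y)
  have r: "a < 4*p" "b < 4*q" "c < 4*p" "d < 4*q" using x y xab ycd by auto
  have z1: "zC p q a b < 8*p*q" "zC p q c d < 8*p*q" using zC_lt r by blast+
  have ee: "cE a = cE c \<and> zC p q a b = zC p q c d"
  proof (cases "cE a = 0")
    case True
    show ?thesis
    proof (cases "cE c = 0")
      case True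
      then show ?thesis using e \<open>cE a = 0\<close> unfolding xab ycd labC_def by simp
    next
      case False
      then show ?thesis using e \<open>cE a = 0\<close> z1 unfolding xab ycd labC_def by simp
    qed
  next
    case False
    show ?thesis
    proof (cases "cE c = 0")
      case True
      then show ?thesis using e \<open>cE a \<noteq> 0\<close> z1 unfolding xab ycd labC_def by simp
    next
      case F2: False
      then have "8*p*q - zC p q a b = 8*p*q - zC p q c d" using e False unfolding xab ycd labC_def by simp
      then have "zC p q a b = zC p q c d" using z1 by linarith
      moreover have "cE a = cE c" using F2 False cE_le[of a] cE_le[of c] by linarith
      ultimately show ?thesis by simp
    qed
  qed
  have T0: "p*q > 0" using assms by simp
  have rs: "cR a b = cR c d \<and> cS p a b = cS p c d"
    using decode[OF cS_lt[OF r(1,2)] cS_lt[OF r(3,4)]] ee unfolding zC_def by blast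
  have m2: "a mod 2 \<le> 1" "b mod 2 \<le> 1" "c mod 2 \<le> 1" "d mod 2 \<le> 1" by simp_all
  have dig: "a mod 2 = c mod 2 \<and> b mod 2 = d mod 2 \<and> cE b = cE d"
    using digits[OF m2(1) m2(2) cE_le[of b] m2(3) m2(4) cE_le[of d]] rs unfolding cR_def by blast
  have xs: "cX a < p" "cX c < p" using cX_lt r by blast+
  have xy: "cX a = cX c \<and> cX b = cX d"
  proof (cases "cE b = 0")
    case True
    then have "cX b * p + cX a = cX d * p + cX c" using rs dig unfolding cS_def by (simp add: mult.commute)
    then show ?thesis using decode[OF xs] by blast
  next
    case False
    then have h: "cX b * p + (p - 1 - cX a) = cX d * p + (p - 1 - cX c)" using rs dig unfolding cS_def by (simp add: mult.commute)
    have "p - 1 - cX a < p" "p - 1 - cX c < p" using assms by simp_all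
    then have "cX b = cX d \<and> p - 1 - cX a = p - 1 - cX c" using decode h by blast
    then show ?thesis using xs by (simp; arith)
  qed
  have "a = c" using recon[of a] recon[of c] xy ee dig by simp
  moreover have "b = d" using recon[of b] recon[of d] xy dig by simp
  ultimately show "x = y" using xab ycd by simp
qed


lemma rangeC:
  assumes "a < 4*p" "b < 4*q"
  shows "labC p q (a,b) \<in> {1..(4*p)*(4*q)}"
proof -
  have z: "zC p q a b < 8*p*q" by (rule zC_lt[OF assms])
  show ?thesis
  proof (cases "cE a = 0")
    case True
    then have "labC p q (a,b) = 8*p*q + 1 + zC p q a b" unfolding labC_def by simp
    then show ?thesis using z by simp
  next
    case False
    then have "labC p q (a,b) = 8*p*q - zC p q a b" unfolding labC_def by simp
    moreover have "8*p*q = 8*(p*q)" "(4*p)*(4*q) = 16*(p*q)" by simp_all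
    ultimately show ?thesis using z by (simp only: atLeastAtMost_iff) linarith
  qed
qed

lemma bijC:
  assumes "p > 0" "q > 0"
  shows "bij_betw (labC p q) ({0..<4*p}\<times>{0..<4*q}) {1..(4*p)*(4*q)}"
proof (rule bij_from_inj[OF injC[OF assms]])
  show "labC p q ` ({0..<4*p}\<times>{0..<4*q}) \<subseteq> {1..(4*p)*(4*q)}"
  proof
    fix y assume "y \<in> labC p q ` ({0..<4*p}\<times>{0..<4*q})"
    then obtain x where x: "x \<in> {0..<4*p}\<times>{0..<4*q}" "y = labC p q x" by blast
    obtain a b where xab: "x = (a,b)" by (cases x)
    have "a < 4*p" "b < 4*q" using x(1) xab by auto
    then show "y \<in> {1..(4*p)*(4*q)}" using rangeC x(2) xab by blast
  qed
qed simp_all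

lemma shiftC:
  assumes "a < 4*p"
  shows "(a+2) mod (4*p) mod 2 = a mod 2 \<and> cE ((a+2) mod (4*p)) = 1 - cE a"
proof (cases "a + 2 < 4*p")
  case True
  then have e: "(a+2) mod (4*p) = a + 2" by simp
  have d: "(a+2) div 2 = a div 2 + 1" by simp
  have "(a div 2 + 1) mod 2 = 1 - (a div 2) mod 2" by (simp add: mod_Suc)
  then show ?thesis unfolding e cE_def d by simp
next
  case False
  obtain k where k: "p = Suc k" using assms by (cases p) auto
  define r where "r = a + 2 - 4*p"
  have r1: "r < 2" "a = r + 2*(2*k+1)" using assms False unfolding r_def k by simp_all
  have a2: "a + 2 = r + 4*p" unfolding r_def using False by simp
  have "(a+2) mod (4*p) = (r + 4*p) mod (4*p)" unfolding a2 ..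
  also have "\<dots> = r mod (4*p)" by (rule mod_add_self2)
  also have "\<dots> = r" using r1(1) k by simp
  finally have e: "(a+2) mod (4*p) = r" .
  have am: "a mod 2 = r mod 2" unfolding r1(2) by (rule mod_mult_self2)
  have ad: "a div 2 = 2*k+1" unfolding r1(2) using r1(1) by simp
  have rd: "r div 2 = 0" using r1(1) by simp
  show ?thesis unfolding e cE_def am ad rd by simp
qed

lemma int_zC:
  assumes "a < 4*p"
  shows "int (zC p q a b) = int (cR a b) * (int p * int q) +
    (if cE b = 0 then int (cX a) + int p * int (cX b) else int p * int (cX b) + int p - 1 - int (cX a))"
proof -
  have "cX a < p" by (rule cX_lt[OF assms])
  then show ?thesis unfolding zC_def cS_def by (cases "cE b = 0") (simp_all add: of_nat_diff)
qed

lemma int_labC: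
  assumes "a < 4*p" "b < 4*q"
  shows "int (labC p q (a,b)) = 8 * int p * int q +
    (if cE a = 0 then 1 + int (zC p q a b) else - int (zC p q a b))"
proof -
  have z: "zC p q a b < 8*p*q" by (rule zC_lt[OF assms])
  then show ?thesis unfolding labC_def by (cases "cE a = 0") (simp_all add: of_nat_diff)
qed

lemma sqC:
  assumes "a < 4*p" "b < 4*q"
  shows "sq (labC p q) (4*p) (4*q) a b = 2*(16*p*q+1)"
proof -
  define a2 where "a2 = (a+2) mod (4*p)"
  define b2 where "b2 = (b+2) mod (4*q)"
  have p0: "p > 0" "q > 0" using assms by auto
  have a2: "a2 < 4*p" unfolding a2_def using p0 by simp
  have b2: "b2 < 4*q" unfolding b2_def using p0 by simp
  have sa: "a2 mod 2 = a mod 2" "cE a2 = 1 - cE a" using shiftC[OF assms(1)] unfolding a2_def by blast+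
  have sb: "b2 mod 2 = b mod 2" "cE b2 = 1 - cE b" using shiftC[OF assms(2)] unfolding b2_def by blast+
  have rr: "cR a2 b = cR a b" "cR a2 b2 = cR a b2" unfolding cR_def sa(1) by simp_all
  have "int (sq (labC p q) (4*p) (4*q) a b) =
     int (labC p q (a,b)) + int (labC p q (a,b2)) + int (labC p q (a2,b)) + int (labC p q (a2,b2))"
    unfolding sq_def a2_def b2_def by simp
  also have "\<dots> = 2 * (16 * int p * int q + 1)"
    unfolding int_labC[OF assms] int_labC[OF assms(1) b2] int_labC[OF a2 assms(2)] int_labC[OF a2 b2]
      int_zC[OF assms(1)] int_zC[OF a2] rr sa(2) sb(2)
    using cE_le[of a] cE_le[of b]
    by (cases "cE a = 0"; cases "cE b = 0") (simp_all add: algebra_simps)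
  finally have eq: "int (sq (labC p q) (4*p) (4*q) a b) = 2 * (16 * int p * int q + 1)" .
  have c: "int (2*(16*p*q+1)) = 2 * (16 * int p * int q + 1)" by simp
  have "int (sq (labC p q) (4*p) (4*q) a b) = int (2*(16*p*q+1))" using eq c by (rule trans[OF _ sym])
  then show ?thesis by (rule int_int_eq[THEN iffD1])
qed

lemma dmC:
  assumes "p > 0" "q > 0"
  shows "distance_magic_labeling (VV (4*p) (4*q)) (EE (4*p) (4*q)) (labC p q)"
proof -
  have pq: "4*p \<ge> 3" "4*q \<ge> 3" using assms by simp_all
  have A: "\<forall>i<4*p. \<forall>j<4*q. sq (labC p q) (4*p) (4*q) i j = 2*(16*p*q+1)"
  proof (intro allI impI)
    fix i j assume "i < 4*p" "j < 4*q"
    then show "sq (labC p q) (4*p) (4*q) i j = 2*(16*p*q+1)" by (rule sqC)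
  qed
  have B: "\<exists>k. \<forall>i<4*p. \<forall>j<4*q. sq (labC p q) (4*p) (4*q) i j = k" using A by (rule exI)
  show ?thesis unfolding dm_char[OF pq] by (rule conjI[OF bijC[OF assms] B])
qed


lemma balnec:
  assumes "m \<ge> 3" "n \<ge> 3" "balanced_distance_magic (VV m n) (EE m n)"
  shows "m = 4 \<or> n = 4"
proof (rule ccontr)
  assume H: "\<not> (m = 4 \<or> n = 4)"
  obtain l where lab: "distance_magic_labeling (VV m n) (EE m n) l"
    and B: "\<forall>w\<in>VV m n. \<forall>u\<in>nbhd (VV m n) (EE m n) w. \<exists>v\<in>nbhd (VV m n) (EE m n) w. l v = card (VV m n) + 1 - l u"
    and ev: "even (card (VV m n))"
    using assms(3) unfolding balanced_distance_magic_def by blast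
  have bij: "bij_betw l (VV m n) {1..card (VV m n)}" using lab unfolding distance_magic_labeling_def by blast
  have inj: "inj_on l (VV m n)" using bij by (rule bij_betw_imp_inj_on)
  have m0: "1 < m" "1 < n" "m - 1 < m" "n - 1 < n" using assms by auto
  have w1: "(1,1) \<in> VV m n" unfolding VV_eq using m0 by simp
  have w2: "(m-1,n-1) \<in> VV m n" unfolding VV_eq using m0 by simp
  have a1: "(1+1) mod m = 2" "(1+m-1) mod m = 0" using assms(1) by simp_all
  have b1: "(1+1) mod n = 2" "(1+n-1) mod n = 0" using assms(2) by simp_all
  have a2: "(m-1+1) mod m = 0" "(m-1+m-1) mod m = m-2"
    using sucm[OF m0(3)] predm[OF m0(3)] assms(1) by simp_all
  have b2: "(n-1+1) mod n = 0" "(n-1+n-1) mod n = n-2"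
    using sucm[OF m0(4)] predm[OF m0(4)] assms(2) by simp_all
  have N1: "nbhd (VV m n) (EE m n) (1,1) = {2,0} \<times> {2,0}"
    using nbhd_eq[OF assms(1,2) m0(1,2)] unfolding a1 b1 .
  have N2: "nbhd (VV m n) (EE m n) (m-1,n-1) = {0,m-2} \<times> {0,n-2}"
    using nbhd_eq[OF assms(1,2) m0(3,4)] unfolding a2 b2 .
  have u1: "(0,0) \<in> nbhd (VV m n) (EE m n) (1,1)" unfolding N1 by simp
  have u2: "(0,0) \<in> nbhd (VV m n) (EE m n) (m-1,n-1)" unfolding N2 by simp
  obtain v1 where v1: "v1 \<in> nbhd (VV m n) (EE m n) (1,1)" "l v1 = card (VV m n) + 1 - l (0,0)"
    using B w1 u1 by blast
  obtain v2 where v2: "v2 \<in> nbhd (VV m n) (EE m n) (m-1,n-1)" "l v2 = card (VV m n) + 1 - l (0,0)"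
    using B w2 u2 by blast
  have sub: "\<And>x. nbhd (VV m n) (EE m n) x \<subseteq> VV m n" unfolding nbhd_def by blast
  have "v1 = v2" using inj_onD[OF inj _ ] v1 v2 sub by (metis subsetD)
  then have vv: "v1 \<in> {2,0} \<times> {2,0}" "v1 \<in> {0,m-2} \<times> {0,n-2}" using v1(1) v2(1) unfolding N1 N2 by auto
  have "fst v1 = 0" using vv H assms by auto
  moreover have "snd v1 = 0" using vv H assms by auto
  ultimately have "v1 = (0,0)" by (simp add: prod_eq_iff)
  then have e: "l (0,0) = card (VV m n) + 1 - l (0,0)" using v1(2) by simp
  have "(0::nat,0::nat) \<in> VV m n" unfolding VV_eq using m0 by simp
  then have "l (0,0) \<in> {1..card (VV m n)}" using bij unfolding bij_betw_def by blast
  then have "2 * l (0,0) = card (VV m n) + 1" using e by simp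
  then show False using ev by presburger
qed


lemma dmnec:
  assumes "m \<ge> 3" "n \<ge> 3" "distance_magic (VV m n) (EE m n)"
  shows "n = 4 \<or> m = 4 \<or> (m mod 4 = 0 \<and> n mod 4 = 0)"
proof -
  obtain l where "distance_magic_labeling (VV m n) (EE m n) l"
    using assms(3) unfolding distance_magic_def by blast
  then have H: "bij_betw l ({0..<m}\<times>{0..<n}) {1..m*n} \<and> (\<exists>k. \<forall>i<m. \<forall>j<n. sq l m n i j = k)"
    unfolding dm_char[OF assms(1,2)] .
  then obtain k where k: "\<forall>i<m. \<forall>j<n. sq l m n i j = k" by blast
  have inj: "inj_on l ({0..<m}\<times>{0..<n})" using H bij_betw_imp_inj_on by blast
  show ?thesis
  proof (cases "m mod 4 = 0")
    case False
    then show ?thesis using neccore[OF assms(1,2) inj k] by blast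
  next
    case True
    show ?thesis
    proof (cases "n mod 4 = 0")
      case False
      have k2: "\<forall>j<n. \<forall>i<m. sq (swp l) n m j i = k" using k unfolding sq_swap by blast
      have "m = 4" using neccore[OF assms(2,1) inj_swap[OF inj] k2 False] .
      then show ?thesis by blast
    qed (use True in blast)
  qed
qed

theorem mainTheorem11:
  fixes m n :: nat
  assumes "m \<ge> 3" and "n \<ge> 3"
  shows "(distance_magic
            (direct_prod_verts (cycle_verts m) (cycle_verts n))
            (direct_prod_adj (cycle_adj m) (cycle_adj n))
          \<longleftrightarrow> n = 4 \<or> m = 4 \<or> (m mod 4 = 0 \<and> n mod 4 = 0))
       \<and> (balanced_distance_magic
            (direct_prod_verts (cycle_verts m) (cycle_verts n))
            (direct_prod_adj (cycle_adj m) (cycle_adj n))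
          \<longleftrightarrow> n = 4 \<or> m = 4)"
proof -
  have n4: "balanced_distance_magic (VV m n) (EE m n) \<and> distance_magic (VV m n) (EE m n)" if "n = 4"
    using balA[OF assms(1)] dmA[OF assms(1)] that unfolding distance_magic_def by blast
  have m4: "balanced_distance_magic (VV m n) (EE m n) \<and> distance_magic (VV m n) (EE m n)" if "m = 4"
    using balB[OF assms(2)] dmB[OF assms(2)] that unfolding distance_magic_def by blast
  have c4: "distance_magic (VV m n) (EE m n)" if "m mod 4 = 0" "n mod 4 = 0"
  proof -
    define p where "p = m div 4"
    define q where "q = n div 4"
    have mp1: "m = 4*p" using div_mult_mod_eq[of m 4] that(1) unfolding p_def by linarith
    have mp2: "n = 4*q" using div_mult_mod_eq[of n 4] that(2) unfolding q_def by linarith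
    note mp = mp1 mp2
    have pq: "p > 0" "q > 0" using assms mp by simp_all
    show ?thesis unfolding mp distance_magic_def using dmC[OF pq] by blast
  qed
  have b2d: "distance_magic (VV m n) (EE m n)" if "balanced_distance_magic (VV m n) (EE m n)"
    using that unfolding balanced_distance_magic_def distance_magic_def by blast
  have P1: "distance_magic (VV m n) (EE m n) \<longleftrightarrow> n = 4 \<or> m = 4 \<or> (m mod 4 = 0 \<and> n mod 4 = 0)"
  proof
    assume "distance_magic (VV m n) (EE m n)"
    then show "n = 4 \<or> m = 4 \<or> (m mod 4 = 0 \<and> n mod 4 = 0)" by (rule dmnec[OF assms])
  next
    assume h: "n = 4 \<or> m = 4 \<or> (m mod 4 = 0 \<and> n mod 4 = 0)"
    show "distance_magic (VV m n) (EE m n)"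
    proof (cases "n = 4")
      case True
      then show ?thesis using n4 by blast
    next
      case False
      show ?thesis
      proof (cases "m = 4")
        case True
        then show ?thesis using m4 by blast
      next
        case F2: False
        then have "m mod 4 = 0" "n mod 4 = 0" using h False by blast+
        then show ?thesis by (rule c4)
      qed
    qed
  qed
  have P2: "balanced_distance_magic (VV m n) (EE m n) \<longleftrightarrow> n = 4 \<or> m = 4"
  proof
    assume "balanced_distance_magic (VV m n) (EE m n)"
    then have "m = 4 \<or> n = 4" by (rule balnec[OF assms])
    then show "n = 4 \<or> m = 4" by blast
  next
    assume h: "n = 4 \<or> m = 4"
    show "balanced_distance_magic (VV m n) (EE m n)"
    proof (cases "n = 4")
      case True
      then show ?thesis using n4 by blast
    next
      case False
      then have "m = 4" using h by blast
      then show ?thesis using m4 by blast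
    qed
  qed
  show ?thesis using P1 P2 by (rule conjI)
qed

end
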